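(* Let $N\geq 2$ be an integer and let $s_m,\sigma_x,\sigma_r,R_M$ be positive constants. Let $(s_i^0)_{1\leq i\leq N}\in(\mathbb{R}_+^* )^N$ and let $(x_i,y_i,S_i,\gamma_i)_{1\leq i\leq N}\in(\mathbb{R}^2\times(\mathbb{R}_+^* )^2)^N$, with $\log(S_i/s_m)\leq R_M$ for all $i$. Write $\vec x_i=(x_i,y_i)$ and $$C(s_i,s_j,d)=\frac{\log(s_j/s_m)}{2R_M\left(1+\frac{d^2}{\sigma_x^2}\right)}\left(1+\tanh\left(\frac{1}{\sigma_r}\log\frac{s_j}{s_i}\right)\right).$$ Then the system $$s_i(0)=s_i^0,\qquad \frac{\mathrm{d}s_i(t)}{\mathrm{d}t}=\gamma_i s_i(t)\left(\log\left(\frac{S_i}{s_m}\right)\left(1-\frac{1}{N-1}\sum_{j\neq i}C(s_i(t),s_j(t),|\vec x_i-\vec x_j|)\right)-\log\left(\frac{s_i(t)}{s_m}\right)\right),\quad 1\leq i\leq N,\ t\in\mathbb{R}_+,$$ has a unique solution $t\mapsto (s_i(t))_{1\leq i\leq N}$ defined on all of $\mathbb{R}_+$, and it takes positive values: $s_i(t)>0$ for all $t\in\mathbb{R}_+$ and all $i$.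
   Context: $|\vec x_i-\vec x_j|$ denotes the Euclidean distance in $\mathbb{R}^2$. *)

theory Defs
  imports "HOL-Analysis.Analysis"
begin

definition interC :: "real \<Rightarrow> real \<Rightarrow> real \<Rightarrow> real \<Rightarrow> real \<Rightarrow> real \<Rightarrow> real \<Rightarrow> real" where
  "interC s_m \<sigma>_x \<sigma>_r R_M si sj d =
     ln (sj / s_m) / (2 * R_M * (1 + d\<^sup>2 / \<sigma>_x\<^sup>2)) * (1 + tanh ((1 / \<sigma>_r) * ln (sj / si)))"

text \<open>Right-hand side of the equation for s_i; indices range over {0..<N},
  the point of index i is (x i, y i) and Euclidean distance is the product metric on real * real.\<close>
definition rhs :: "nat \<Rightarrow> real \<Rightarrow> real \<Rightarrow> real \<Rightarrow> real \<Rightarrow> (nat \<Rightarrow> real) \<Rightarrow> (nat \<Rightarrow> real)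
      \<Rightarrow> (nat \<Rightarrow> real) \<Rightarrow> (nat \<Rightarrow> real) \<Rightarrow> (nat \<Rightarrow> real) \<Rightarrow> nat \<Rightarrow> real" where
  "rhs N s_m \<sigma>_x \<sigma>_r R_M x y S \<gamma> s i =
     \<gamma> i * s i * (ln (S i / s_m) *
        (1 - (1 / real (N - 1)) *
             (\<Sum>j\<in>{..<N} - {i}. interC s_m \<sigma>_x \<sigma>_r R_M (s i) (s j) (dist (x i, y i) (x j, y j))))
      - ln (s i / s_m))"

definition is_solution :: "nat \<Rightarrow> real \<Rightarrow> real \<Rightarrow> real \<Rightarrow> real \<Rightarrow> (nat \<Rightarrow> real) \<Rightarrow> (nat \<Rightarrow> real)
      \<Rightarrow> (nat \<Rightarrow> real) \<Rightarrow> (nat \<Rightarrow> real) \<Rightarrow> (nat \<Rightarrow> real) \<Rightarrow> (nat \<Rightarrow> real \<Rightarrow> real) \<Rightarrow> bool" where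
  "is_solution N s_m \<sigma>_x \<sigma>_r R_M x y S \<gamma> s0 s \<longleftrightarrow>
     (\<forall>i<N. s i 0 = s0 i) \<and>
     (\<forall>i<N. \<forall>t\<ge>0. (s i has_real_derivative
          rhs N s_m \<sigma>_x \<sigma>_r R_M x y S \<gamma> (\<lambda>j. s j t) i) (at t within {0..}))"

end

theory Submission
  imports Defs
begin


lemma nonincr_mvt:
  fixes g g' :: "real \<Rightarrow> real"
  assumes "a \<le> b" "\<forall>x\<in>{a..b}. (g has_real_derivative g' x) (at x within {a..b})"
    "\<forall>x\<in>{a..b}. g' x \<le> 0"
  shows "g b \<le> g a"
proof -
  have "\<exists>x\<in>{a..b}. g b - g a = (\<lambda>h. g' x * h) (b - a)"
    apply (rule mvt_very_simple[OF assms(1)])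
    using assms(2) by (simp add: has_field_derivative_def)
  then obtain x where x: "x \<in> {a..b}" "g b - g a = (b - a) * g' x" by (auto simp: mult.commute)
  have "(b - a) * g' x \<le> 0" using assms(1) assms(3) x(1)
    by (simp add: mult_nonneg_nonpos)
  then show ?thesis using x by linarith
qed

lemma lyap:
  fixes v d :: "nat \<Rightarrow> real \<Rightarrow> real"
  assumes eps: "\<epsilon> > 0" and T: "0 \<le> T"
    and der: "\<forall>j<N. \<forall>t\<in>{0..T}. (v j has_real_derivative d j t) (at t within {0..T})"
    and bnd: "\<forall>t\<in>{0..T}. (\<Sum>j<N. \<bar>d j t\<bar>) \<le> K * (\<Sum>j<N. sqrt (\<epsilon> + (v j t)\<^sup>2))"
    and t: "t \<in> {0..T}"
  shows "(\<Sum>j<N. sqrt (\<epsilon> + (v j t)\<^sup>2)) \<le> (\<Sum>j<N. sqrt (\<epsilon> + (v j 0)\<^sup>2)) * exp (K * t)"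
proof -
  define V where "V = (\<lambda>t. (\<Sum>j<N. sqrt (\<epsilon> + (v j t)\<^sup>2)))"
  define V' where "V' = (\<lambda>t. (\<Sum>j<N. v j t * d j t / sqrt (\<epsilon> + (v j t)\<^sup>2)))"
  have pos: "\<epsilon> + (v j x)\<^sup>2 > 0" for j x using eps by (simp add: add_pos_nonneg)
  have dV: "(V has_real_derivative V' x) (at x within {0..t})" if x: "x \<in> {0..t}" for x
  proof -
    have xT: "x \<in> {0..T}" using x t by auto
    have "((\<lambda>t. sqrt (\<epsilon> + (v j t)\<^sup>2)) has_real_derivative v j x * d j x / sqrt (\<epsilon> + (v j x)\<^sup>2))
        (at x within {0..t})" if j: "j < N" for j
    proof -
      have d1: "(v j has_real_derivative d j x) (at x within {0..t})"
        using der j xT has_field_derivative_subset[of "v j" "d j x" x "{0..T}" "{0..t}"] t by auto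
      show ?thesis
        using pos[of j x]
        by (auto intro!: derivative_eq_intros d1 simp: power2_eq_square field_simps)
    qed
    then show ?thesis unfolding V_def V'_def
      by (intro DERIV_sum) auto
  qed
  have V'le: "V' x \<le> K * V x" if x: "x \<in> {0..t}" for x
  proof -
    have "V' x \<le> (\<Sum>j<N. \<bar>d j x\<bar>)" unfolding V'_def
    proof (rule sum_mono)
      fix j assume "j \<in> {..<N}"
      have s: "\<bar>v j x\<bar> \<le> sqrt (\<epsilon> + (v j x)\<^sup>2)"
        by (metis eps less_eq_real_def real_sqrt_abs real_sqrt_le_mono le_add_same_cancel2)
      have sp: "sqrt (\<epsilon> + (v j x)\<^sup>2) > 0" using pos by simp
      have "v j x * d j x \<le> \<bar>v j x\<bar> * \<bar>d j x\<bar>" by (metis abs_ge_self abs_mult)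
      also have "\<dots> \<le> sqrt (\<epsilon> + (v j x)\<^sup>2) * \<bar>d j x\<bar>" using s by (simp add: mult_right_mono)
      finally show "v j x * d j x / sqrt (\<epsilon> + (v j x)\<^sup>2) \<le> \<bar>d j x\<bar>"
        using sp by (simp add: divide_le_eq mult.commute)
    qed
    also have "\<dots> \<le> K * V x" using bnd x t unfolding V_def by auto
    finally show ?thesis .
  qed
  define g where "g = (\<lambda>x. exp (- K * x) * V x)"
  have "g t \<le> g 0"
  proof (rule nonincr_mvt[where g=g and a=0 and b=t and g' = "\<lambda>x. exp (- K * x) * (V' x - K * V x)"])
    show "0 \<le> t" using t by auto
    show "\<forall>x\<in>{0..t}. (g has_real_derivative exp (- K * x) * (V' x - K * V x)) (at x within {0..t})"
    proof
      fix x assume x: "x \<in> {0..t}"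
      show "(g has_real_derivative exp (- K * x) * (V' x - K * V x)) (at x within {0..t})"
        unfolding g_def
        by (rule derivative_eq_intros dV[OF x] refl | simp add: algebra_simps)+
    qed
    show "\<forall>x\<in>{0..t}. exp (- K * x) * (V' x - K * V x) \<le> 0"
      using V'le by (simp add: mult_nonneg_nonpos)
  qed
  then have "exp (- K * t) * V t \<le> V 0" unfolding g_def by simp
  then have "V t \<le> V 0 * exp (K * t)"
    by (simp add: exp_minus field_simps)
  then show ?thesis unfolding V_def .
qed



lemma cont_int:
  assumes "continuous_on {0..T} (G::real\<Rightarrow>real)"
  shows "continuous_on {0..T} (\<lambda>t. integral {0..t} G)"
  unfolding continuous_on_eq_continuous_within
proof
  fix x assume x: "x \<in> {0..T}"
  show "continuous (at x within {0..T}) (\<lambda>t. integral {0..t} G)"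
    using integral_has_real_derivative[OF assms x] by (rule DERIV_continuous)
qed

lemma int_bound:
  fixes g :: "nat \<Rightarrow> real \<Rightarrow> real" and h :: "real \<Rightarrow> real"
  assumes "\<forall>j<N. continuous_on {0..t} (g j)" "continuous_on {0..t} h"
    "\<forall>\<tau>\<in>{0..t}. (\<Sum>j<N. \<bar>g j \<tau>\<bar>) \<le> h \<tau>"
  shows "(\<Sum>j<N. \<bar>integral {0..t} (g j)\<bar>) \<le> integral {0..t} h"
proof -
  have ig: "g j integrable_on {0..t}" if "j < N" for j
    using assms(1) that integrable_continuous_real by blast
  have iga: "(\<lambda>\<tau>. \<bar>g j \<tau>\<bar>) integrable_on {0..t}" if "j < N" for j
    using assms(1) that by (intro integrable_continuous_real continuous_intros) auto
  have "(\<Sum>j<N. \<bar>integral {0..t} (g j)\<bar>) \<le> (\<Sum>j<N. integral {0..t} (\<lambda>\<tau>. \<bar>g j \<tau>\<bar>))"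
  proof (rule sum_mono)
    fix j assume j: "j \<in> {..<N}"
    show "\<bar>integral {0..t} (g j)\<bar> \<le> integral {0..t} (\<lambda>\<tau>. \<bar>g j \<tau>\<bar>)"
      using integral_norm_bound_integral[OF ig iga, of j] j by auto
  qed
  also have "\<dots> = integral {0..t} (\<lambda>\<tau>. \<Sum>j<N. \<bar>g j \<tau>\<bar>)"
    by (rule integral_sum[symmetric]) (use iga in auto)
  also have "\<dots> \<le> integral {0..t} h"
    apply (rule integral_le)
    using iga apply (intro integrable_sum) apply auto[2]
    using assms integrable_continuous_real by auto
  finally show ?thesis .
qed

lemma integral_pow:
  assumes "0 \<le> t"
  shows "integral {0..t} (\<lambda>\<tau>. c * \<tau> ^ n) = c * t ^ Suc n / real (Suc n)"
proof -
  have "((\<lambda>\<tau>. c * \<tau> ^ n) has_integral ((\<lambda>\<tau>. c * \<tau> ^ Suc n / real (Suc n)) t - (\<lambda>\<tau>. c * \<tau> ^ Suc n / real (Suc n)) 0)) {0..t}"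
  proof (rule fundamental_theorem_of_calculus[OF assms])
    fix x assume "x \<in> {0..t}"
    show "((\<lambda>\<tau>. c * \<tau> ^ Suc n / real (Suc n)) has_vector_derivative c * x ^ n) (at x within {0..t})"
      unfolding has_real_derivative_iff_has_vector_derivative[symmetric]
      using DERIV_cdivide[OF DERIV_cmult[OF DERIV_pow[of "Suc n" x "{0..t}"], of c], of "real (Suc n)"]
      by (simp del: of_nat_Suc power_Suc)
  qed
  then show ?thesis by (rule integral_unique[THEN trans]) simp
qed



lemma picard:
  fixes F :: "real \<Rightarrow> (nat \<Rightarrow> real) \<Rightarrow> nat \<Rightarrow> real" and u0 :: "nat \<Rightarrow> real"
  assumes cont: "\<And>P T i. i < N \<Longrightarrow> (\<And>j. j < N \<Longrightarrow> continuous_on {0..T} (P j)) \<Longrightarrow>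
                    continuous_on {0..T} (\<lambda>t. F t (\<lambda>j. P j t) i)"
    and lip: "\<And>T. \<exists>L\<ge>0. \<forall>t\<in>{0..T}. \<forall>u v. (\<Sum>i<N. \<bar>F t u i - F t v i\<bar>) \<le> L * (\<Sum>j<N. \<bar>u j - v j\<bar>)"
    and bd: "\<And>T. \<exists>M. \<forall>t\<in>{0..T}. \<forall>u. (\<Sum>i<N. \<bar>F t u i\<bar>) \<le> M"
  shows "\<exists>U. \<forall>i<N. U i 0 = u0 i \<and>
           (\<forall>t\<ge>0. (U i has_real_derivative F t (\<lambda>j. U j t) i) (at t within {0..}))"
proof -
  define P where "P = rec_nat (\<lambda>i t. u0 i) (\<lambda>k Pk i t. u0 i + integral {0..t} (\<lambda>\<tau>. F \<tau> (\<lambda>j. Pk j \<tau>) i))"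
  have P0: "P 0 i t = u0 i" for i t by (simp add: P_def)
  have PS: "P (Suc k) i t = u0 i + integral {0..t} (\<lambda>\<tau>. F \<tau> (\<lambda>j. P k j \<tau>) i)" for k i t
    by (simp add: P_def)
  have Pcont: "continuous_on {0..T} (P k j)" if "j < N" for k j T
    using that
  proof (induction k arbitrary: j)
    case 0 then show ?case by (simp add: P0)
  next
    case (Suc k)
    have "continuous_on {0..T} (\<lambda>t. u0 j + integral {0..t} (\<lambda>\<tau>. F \<tau> (\<lambda>j. P k j \<tau>) j))"
      by (intro continuous_intros cont_int cont Suc)
    then show ?case unfolding PS[abs_def] by simp
  qed
  have Fcont: "continuous_on {0..T} (\<lambda>\<tau>. F \<tau> (\<lambda>j. P k j \<tau>) i)" if "i < N" for k i T
    using that by (intro cont Pcont)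
  define U where "U = (\<lambda>j t. u0 j + suminf (\<lambda>k. P (Suc k) j t - P k j t))"
  have main: "\<forall>j<N. continuous_on {0..T} (U j) \<and>
      (\<forall>t\<in>{0..T}. U j t = u0 j + integral {0..t} (\<lambda>\<tau>. F \<tau> (\<lambda>i. U i \<tau>) j))" if T: "0 \<le> T" for T
  proof -
    obtain L where L: "L \<ge> 0" "\<forall>t\<in>{0..T}. \<forall>u v. (\<Sum>i<N. \<bar>F t u i - F t v i\<bar>) \<le> L * (\<Sum>j<N. \<bar>u j - v j\<bar>)"
      using lip by blast
    obtain M where M: "\<forall>t\<in>{0..T}. \<forall>u. (\<Sum>i<N. \<bar>F t u i\<bar>) \<le> M" using bd by blast
    have M0: "M \<ge> 0"
    proof -
      have "(\<Sum>i<N. \<bar>F 0 u0 i\<bar>) \<le> M" using M T by auto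
      moreover have "0 \<le> (\<Sum>i<N. \<bar>F 0 u0 i\<bar>)" by (rule sum_nonneg) auto
      ultimately show ?thesis by linarith
    qed
    define D where "D = (\<lambda>k t. \<Sum>j<N. \<bar>P (Suc k) j t - P k j t\<bar>)"
    have Dbound: "\<forall>t\<in>{0..T}. D k t \<le> M * L ^ k * t ^ Suc k / fact (Suc k)" for k
    proof (induction k)
      case 0
      show ?case
      proof
        fix t assume t: "t \<in> {0..T}"
        have "D 0 t = (\<Sum>j<N. \<bar>integral {0..t} (\<lambda>\<tau>. F \<tau> (\<lambda>j. P 0 j \<tau>) j)\<bar>)"
          unfolding D_def PS by (simp add: P0)
        also have "\<dots> \<le> integral {0..t} (\<lambda>\<tau>. M)"
          apply (rule int_bound)
          using Fcont M t by auto
        also have "\<dots> = M * t" using t by simp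
        finally show "D 0 t \<le> M * L ^ 0 * t ^ Suc 0 / fact (Suc 0)" by simp
      qed
    next
      case (Suc k)
      show ?case
      proof
        fix t assume t: "t \<in> {0..T}"
        have "D (Suc k) t = (\<Sum>j<N. \<bar>integral {0..t} (\<lambda>\<tau>. F \<tau> (\<lambda>j. P (Suc k) j \<tau>) j - F \<tau> (\<lambda>j. P k j \<tau>) j)\<bar>)"
          unfolding D_def
        proof (rule sum.cong[OF refl])
          fix j assume j: "j \<in> {..<N}"
          have "P (Suc (Suc k)) j t - P (Suc k) j t = integral {0..t} (\<lambda>\<tau>. F \<tau> (\<lambda>j. P (Suc k) j \<tau>) j)
              - integral {0..t} (\<lambda>\<tau>. F \<tau> (\<lambda>j. P k j \<tau>) j)"
            by (simp only: PS[of "Suc k" j t] PS[of k j t])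
          also have "\<dots> = integral {0..t} (\<lambda>\<tau>. F \<tau> (\<lambda>j. P (Suc k) j \<tau>) j - F \<tau> (\<lambda>j. P k j \<tau>) j)"
            apply (rule integral_diff[symmetric])
            by (rule integrable_continuous_real Fcont | use j in simp)+
          finally show "\<bar>P (Suc (Suc k)) j t - P (Suc k) j t\<bar> = \<bar>integral {0..t} (\<lambda>\<tau>. F \<tau> (\<lambda>j. P (Suc k) j \<tau>) j - F \<tau> (\<lambda>j. P k j \<tau>) j)\<bar>"
            by simp
        qed
        also have "\<dots> \<le> integral {0..t} (\<lambda>\<tau>. (L * M * L ^ k / fact (Suc k)) * \<tau> ^ Suc k)"
        proof (rule int_bound)
          show "\<forall>j<N. continuous_on {0..t} (\<lambda>\<tau>. F \<tau> (\<lambda>j. P (Suc k) j \<tau>) j - F \<tau> (\<lambda>j. P k j \<tau>) j)"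
            using Fcont by (auto intro!: continuous_intros)
          show "continuous_on {0..t} (\<lambda>\<tau>. L * M * L ^ k / fact (Suc k) * \<tau> ^ Suc k)"
            by (intro continuous_intros)
          show "\<forall>\<tau>\<in>{0..t}. (\<Sum>j<N. \<bar>F \<tau> (\<lambda>j. P (Suc k) j \<tau>) j - F \<tau> (\<lambda>j. P k j \<tau>) j\<bar>)
                 \<le> L * M * L ^ k / fact (Suc k) * \<tau> ^ Suc k"
          proof
            fix \<tau> assume tau: "\<tau> \<in> {0..t}"
            then have tauT: "\<tau> \<in> {0..T}" using t by auto
            have "(\<Sum>j<N. \<bar>F \<tau> (\<lambda>j. P (Suc k) j \<tau>) j - F \<tau> (\<lambda>j. P k j \<tau>) j\<bar>) \<le> L * D k \<tau>"
              using L(2) tauT unfolding D_def by blast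
            also have "\<dots> \<le> L * (M * L ^ k * \<tau> ^ Suc k / fact (Suc k))"
              using Suc tauT L(1) by (intro mult_left_mono) auto
            finally show "(\<Sum>j<N. \<bar>F \<tau> (\<lambda>j. P (Suc k) j \<tau>) j - F \<tau> (\<lambda>j. P k j \<tau>) j\<bar>)
                 \<le> L * M * L ^ k / fact (Suc k) * \<tau> ^ Suc k" by (simp add: field_simps)
          qed
        qed
        also have "\<dots> = M * L ^ Suc k * t ^ Suc (Suc k) / fact (Suc (Suc k))"
          using t by (subst integral_pow) (auto simp: field_simps simp del: of_nat_Suc)
        finally show "D (Suc k) t \<le> M * L ^ Suc k * t ^ Suc (Suc k) / fact (Suc (Suc k))" .
      qed
    qed
    define b where "b = (\<lambda>k. M * L ^ k * T ^ Suc k / fact (Suc k))"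
    have b0: "b k \<ge> 0" for k unfolding b_def using M0 L T by simp
    have Db: "\<forall>t\<in>{0..T}. D k t \<le> b k" for k
    proof
      fix t assume t: "t \<in> {0..T}"
      have "M * L ^ k * t ^ Suc k \<le> M * L ^ k * T ^ Suc k"
        using t M0 L by (intro mult_left_mono power_mono) auto
      then show "D k t \<le> b k" using Dbound[of k] t unfolding b_def
        by (meson divide_right_mono fact_ge_zero order.trans)
    qed
    have sb: "summable b"
    proof (rule summable_comparison_test[where g = "\<lambda>k. (M * T) * (inverse (fact k) * (L * T) ^ k)"])
      show "\<exists>N. \<forall>n\<ge>N. norm (b n) \<le> M * T * (inverse (fact n) * (L * T) ^ n)"
      proof (intro exI allI impI)
        fix n :: nat
        have "fact n \<le> (fact (Suc n) :: real)" by (intro fact_mono) auto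
        then have "M * L ^ n * T ^ Suc n / fact (Suc n) \<le> M * L ^ n * T ^ Suc n / fact n"
          using M0 L T by (intro divide_left_mono) auto
        also have "M * L ^ n * T ^ Suc n / fact n = M * T * (inverse (fact n) * (L * T) ^ n)"
          by (simp add: field_simps power_mult_distrib)
        finally show "norm (b n) \<le> M * T * (inverse (fact n) * (L * T) ^ n)"
          using b0[of n] unfolding b_def by simp
      qed
      show "summable (\<lambda>k. M * T * (inverse (fact k) * (L * T) ^ k))"
        by (intro summable_mult summable_exp)
    qed
    have dif_le: "\<bar>P (Suc k) j t - P k j t\<bar> \<le> D k t" if "j < N" for j k t
      unfolding D_def using that by (intro member_le_sum) auto
    have sumj: "summable (\<lambda>k. P (Suc k) j t - P k j t)" if "j < N" "t \<in> {0..T}" for j t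
      apply (rule summable_comparison_test[OF _ sb])
    proof (intro exI allI impI)
      fix n
      show "norm (P (Suc n) j t - P n j t) \<le> b n"
        using dif_le[OF that(1), of n t] Db[of n] that(2) by force
    qed
    have Plim: "(\<lambda>k. P k j t) \<longlonglongrightarrow> U j t" if "j < N" "t \<in> {0..T}" for j t
    proof -
      have "(\<lambda>k. u0 j + (\<Sum>m<k. P (Suc m) j t - P m j t)) \<longlonglongrightarrow> U j t"
        unfolding U_def by (intro tendsto_add tendsto_const summable_LIMSEQ sumj that)
      moreover have "u0 j + (\<Sum>m<k. P (Suc m) j t - P m j t) = P k j t" for k
        by (subst sum_lessThan_telescope) (simp add: P0)
      ultimately show ?thesis by simp
    qed
    define r where "r = (\<lambda>k. suminf b - (\<Sum>m<k. b m))"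
    have r0: "r \<longlonglongrightarrow> 0"
    proof -
      have "(\<lambda>k. suminf b - (\<Sum>m<k. b m)) \<longlonglongrightarrow> suminf b - suminf b"
        by (intro tendsto_diff tendsto_const summable_LIMSEQ sb)
      then show ?thesis unfolding r_def by simp
    qed
    have tail: "(\<Sum>j<N. \<bar>U j t - P k j t\<bar>) \<le> r k" if t: "t \<in> {0..T}" for k t
    proof (rule LIMSEQ_le_const2)
      show "(\<lambda>n. \<Sum>j<N. \<bar>P n j t - P k j t\<bar>) \<longlonglongrightarrow> (\<Sum>j<N. \<bar>U j t - P k j t\<bar>)"
        using Plim t by (intro tendsto_sum tendsto_rabs tendsto_diff tendsto_const) auto
      show "\<exists>N0. \<forall>n\<ge>N0. (\<Sum>j<N. \<bar>P n j t - P k j t\<bar>) \<le> r k"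
      proof (intro exI allI impI)
        fix n assume n: "n \<ge> k"
        have "(\<Sum>j<N. \<bar>P n j t - P k j t\<bar>) = (\<Sum>j<N. \<bar>\<Sum>m=k..<n. P (Suc m) j t - P m j t\<bar>)"
          using n by (simp add: sum_Suc_diff'[of k n "\<lambda>m. P m _ t"])
        also have "\<dots> \<le> (\<Sum>j<N. \<Sum>m=k..<n. \<bar>P (Suc m) j t - P m j t\<bar>)"
          by (intro sum_mono sum_abs)
        also have "\<dots> = (\<Sum>m=k..<n. D m t)" unfolding D_def by (rule sum.swap)
        also have "\<dots> \<le> (\<Sum>m=k..<n. b m)" using Db t by (intro sum_mono) auto
        also have "\<dots> = (\<Sum>m<n. b m) - (\<Sum>m<k. b m)"
          using n sum.atLeastLessThan_concat[of 0 k n b] by (simp add: atLeast0LessThan)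
        also have "\<dots> \<le> r k" unfolding r_def
          using sum_le_suminf[OF sb, of "{..<n}"] b0 by auto
        finally show "(\<Sum>j<N. \<bar>P n j t - P k j t\<bar>) \<le> r k" .
      qed
    qed
    have Ucont: "continuous_on {0..T} (U j)" if j: "j < N" for j
    proof (rule uniform_limit_theorem[where f = "\<lambda>k. P k j" and F = sequentially])
      show "\<forall>\<^sub>F n in sequentially. continuous_on {0..T} (P n j)" using Pcont j by simp
      show "uniform_limit {0..T} (\<lambda>k. P k j) (U j) sequentially"
      proof (rule uniform_limitI)
        fix e :: real assume e: "e > 0"
        have "\<forall>\<^sub>F n in sequentially. r n < e" using r0 e by (rule order_tendstoD)
        then show "\<forall>\<^sub>F n in sequentially. \<forall>x\<in>{0..T}. dist (P n j x) (U j x) < e"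
        proof (rule eventually_mono)
          fix n assume rn: "r n < e"
          show "\<forall>x\<in>{0..T}. dist (P n j x) (U j x) < e"
          proof
            fix x assume x: "x \<in> {0..T}"
            have "\<bar>U j x - P n j x\<bar> \<le> (\<Sum>j<N. \<bar>U j x - P n j x\<bar>)"
              using j by (intro member_le_sum) auto
            then show "dist (P n j x) (U j x) < e" using tail[OF x, of n] rn
              by (simp add: dist_real_def abs_minus_commute)
          qed
        qed
      qed
    qed simp
    have inteq: "U j t = u0 j + integral {0..t} (\<lambda>\<tau>. F \<tau> (\<lambda>i. U i \<tau>) j)" if j: "j < N" and t: "t \<in> {0..T}" for j t
    proof -
      have FUc: "continuous_on {0..t} (\<lambda>\<tau>. F \<tau> (\<lambda>i. U i \<tau>) j)"
        using j t by (intro cont continuous_on_subset[OF Ucont]) auto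
      have "(\<lambda>k. P (Suc k) j t) \<longlonglongrightarrow> U j t" using Plim[OF j t] by (rule LIMSEQ_Suc)
      moreover have "(\<lambda>k. P (Suc k) j t) \<longlonglongrightarrow> u0 j + integral {0..t} (\<lambda>\<tau>. F \<tau> (\<lambda>i. U i \<tau>) j)"
      proof -
        have "(\<lambda>k. integral {0..t} (\<lambda>\<tau>. F \<tau> (\<lambda>i. P k i \<tau>) j) - integral {0..t} (\<lambda>\<tau>. F \<tau> (\<lambda>i. U i \<tau>) j)) \<longlonglongrightarrow> 0"
        proof (rule tendsto_sandwich[where f = "\<lambda>_. 0" and h = "\<lambda>k. \<bar>(t * L) * r k\<bar>", THEN tendsto_rabs_zero_cancel])
          show "(\<lambda>k. \<bar>t * L * r k\<bar>) \<longlonglongrightarrow> 0"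
            using tendsto_rabs_zero[OF tendsto_mult_right_zero[OF r0, of "t * L"]] .
          show "(\<lambda>_. 0) \<longlonglongrightarrow> (0::real)" by simp
          show "\<forall>\<^sub>F n in sequentially. 0 \<le> \<bar>integral {0..t} (\<lambda>\<tau>. F \<tau> (\<lambda>i. P n i \<tau>) j) - integral {0..t} (\<lambda>\<tau>. F \<tau> (\<lambda>i. U i \<tau>) j)\<bar>"
            by simp
          show "\<forall>\<^sub>F n in sequentially. \<bar>integral {0..t} (\<lambda>\<tau>. F \<tau> (\<lambda>i. P n i \<tau>) j) - integral {0..t} (\<lambda>\<tau>. F \<tau> (\<lambda>i. U i \<tau>) j)\<bar> \<le> \<bar>t * L * r n\<bar>"
          proof (rule always_eventually, rule allI)
            fix n
            have "\<bar>integral {0..t} (\<lambda>\<tau>. F \<tau> (\<lambda>i. P n i \<tau>) j) - integral {0..t} (\<lambda>\<tau>. F \<tau> (\<lambda>i. U i \<tau>) j)\<bar>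
                = \<bar>integral {0..t} (\<lambda>\<tau>. F \<tau> (\<lambda>i. P n i \<tau>) j - F \<tau> (\<lambda>i. U i \<tau>) j)\<bar>"
              apply (subst integral_diff)
              by (rule integrable_continuous_real Fcont FUc | use j in simp)+
            also have "\<dots> \<le> (\<Sum>i<N. \<bar>integral {0..t} (\<lambda>\<tau>. F \<tau> (\<lambda>i. P n i \<tau>) i - F \<tau> (\<lambda>i. U i \<tau>) i)\<bar>)"
              using j by (intro member_le_sum[where f = "\<lambda>i. \<bar>integral {0..t} (\<lambda>\<tau>. F \<tau> (\<lambda>i. P n i \<tau>) i - F \<tau> (\<lambda>i. U i \<tau>) i)\<bar>"]) auto
            also have "\<dots> \<le> integral {0..t} (\<lambda>\<tau>. L * r n)"
            proof (rule int_bound)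
              show "\<forall>ja<N. continuous_on {0..t} (\<lambda>\<tau>. F \<tau> (\<lambda>i. P n i \<tau>) ja - F \<tau> (\<lambda>i. U i \<tau>) ja)"
                using t by (auto intro!: continuous_intros Fcont cont continuous_on_subset[OF Ucont])
              show "\<forall>\<tau>\<in>{0..t}. (\<Sum>ja<N. \<bar>F \<tau> (\<lambda>i. P n i \<tau>) ja - F \<tau> (\<lambda>i. U i \<tau>) ja\<bar>) \<le> L * r n"
              proof
                fix \<tau> assume tau: "\<tau> \<in> {0..t}"
                then have tauT: "\<tau> \<in> {0..T}" using t by auto
                have "(\<Sum>ja<N. \<bar>F \<tau> (\<lambda>i. P n i \<tau>) ja - F \<tau> (\<lambda>i. U i \<tau>) ja\<bar>) \<le> L * (\<Sum>i<N. \<bar>P n i \<tau> - U i \<tau>\<bar>)"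
                  using L(2) tauT by blast
                also have "\<dots> \<le> L * r n" using tail[OF tauT, of n] L(1)
                  by (simp add: abs_minus_commute mult_left_mono)
                finally show "(\<Sum>ja<N. \<bar>F \<tau> (\<lambda>i. P n i \<tau>) ja - F \<tau> (\<lambda>i. U i \<tau>) ja\<bar>) \<le> L * r n" .
              qed
            qed simp
            also have "\<dots> \<le> \<bar>t * L * r n\<bar>"
            proof -
              have "integral {0..t} (\<lambda>\<tau>. L * r n) = t * L * r n" using t by simp
              then show ?thesis by (metis abs_ge_self)
            qed
            finally show "\<bar>integral {0..t} (\<lambda>\<tau>. F \<tau> (\<lambda>i. P n i \<tau>) j) - integral {0..t} (\<lambda>\<tau>. F \<tau> (\<lambda>i. U i \<tau>) j)\<bar> \<le> \<bar>t * L * r n\<bar>" .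
          qed
        qed
        then have "(\<lambda>k. u0 j + integral {0..t} (\<lambda>\<tau>. F \<tau> (\<lambda>i. P k i \<tau>) j)) \<longlonglongrightarrow> u0 j + integral {0..t} (\<lambda>\<tau>. F \<tau> (\<lambda>i. U i \<tau>) j)"
          by (intro tendsto_add tendsto_const) (simp add: LIM_zero_iff)
        then show ?thesis by (simp add: PS)
      qed
      ultimately show ?thesis by (rule LIMSEQ_unique)
    qed
    show ?thesis using Ucont inteq by blast
  qed
  show ?thesis
  proof (intro exI allI impI conjI)
    fix i assume i: "i < N"
    show "U i 0 = u0 i" using main[of 0] i by simp
    fix t :: real assume t: "t \<ge> 0"
    let ?G = "\<lambda>\<tau>. F \<tau> (\<lambda>j. U j \<tau>) i"
    have m: "\<forall>j<N. continuous_on {0..t+1} (U j) \<and>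
      (\<forall>s\<in>{0..t+1}. U j s = u0 j + integral {0..s} (\<lambda>\<tau>. F \<tau> (\<lambda>i. U i \<tau>) j))"
      using main[of "t+1"] t by simp
    have Gc: "continuous_on {0..t+1} ?G" using m i by (intro cont) auto
    have "((\<lambda>s. u0 i + integral {0..s} ?G) has_real_derivative ?G t) (at t within {0..t+1})"
      using integral_has_real_derivative[OF Gc, of t] t by (auto intro!: derivative_eq_intros)
    then have d1: "(U i has_real_derivative ?G t) (at t within {0..t+1})"
      apply (rule has_field_derivative_transform_within[where d = 1])
      using t m i by auto
    have "at t within {0..t+1} = at t within {0..}"
      by (rule at_within_nhd[where S = "{..<t+1}"]) auto
    then show "(U i has_real_derivative ?G t) (at t within {0..})" using d1 by simp
  qed
qed



lemma tanh_lip_aux: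
  fixes a b :: real
  assumes "a < b"
  shows "\<bar>tanh b - tanh a\<bar> \<le> b - a"
proof -
  have der: "(tanh has_real_derivative 1 - tanh x ^ 2) (at x)" for x :: real
    using has_field_derivative_tanh[OF _ DERIV_ident, of x] by simp
  obtain z where z: "a < z" "z < b" "tanh b - tanh a = (b - a) * (1 - tanh z ^ 2)"
    using MVT2[OF assms, of tanh "\<lambda>x. 1 - tanh x ^ 2"] der by blast
  have "0 \<le> 1 - tanh z ^ 2" "1 - tanh z ^ 2 \<le> 1"
    using tanh_real_bounds[of z] by (auto simp: abs_square_le_1)
  then show ?thesis using z assms
    by (simp add: abs_mult mult_left_le)
qed

lemma tanh_lip: "\<bar>tanh a - tanh b\<bar> \<le> \<bar>a - b\<bar>" for a b :: real
proof -
  consider "a < b" | "a = b" | "b < a" by linarith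
  then show ?thesis
  proof cases
    case 1 then show ?thesis using tanh_lip_aux[OF 1] by (simp add: abs_minus_commute)
  next
    case 2 then show ?thesis by simp
  next
    case 3 then show ?thesis using tanh_lip_aux[OF 3] by simp
  qed
qed

lemma h_lip:
  fixes p q p' q' k R :: real
  assumes "\<bar>p'\<bar> \<le> R" "k \<ge> 0"
  shows "\<bar>p * (1 + tanh (k * (p - q))) - p' * (1 + tanh (k * (p' - q')))\<bar>
          \<le> (2 + R * k) * \<bar>p - p'\<bar> + R * k * \<bar>q - q'\<bar>"
proof -
  have eq: "p * (1 + tanh (k * (p - q))) - p' * (1 + tanh (k * (p' - q')))
     = (p - p') * (1 + tanh (k * (p - q))) + p' * (tanh (k * (p - q)) - tanh (k * (p' - q')))"
    by (simp add: algebra_simps)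
  have t1: "\<bar>1 + tanh (k * (p - q))\<bar> \<le> 2" using tanh_real_bounds[of "k * (p - q)"] by auto
  have t2: "\<bar>tanh (k * (p - q)) - tanh (k * (p' - q'))\<bar> \<le> k * (\<bar>p - p'\<bar> + \<bar>q - q'\<bar>)"
  proof -
    have "\<bar>tanh (k * (p - q)) - tanh (k * (p' - q'))\<bar> \<le> \<bar>k * (p - q) - k * (p' - q')\<bar>"
      by (rule tanh_lip)
    also have "\<dots> = k * \<bar>(p - p') - (q - q')\<bar>"
    proof -
      have "k * (p - q) - k * (p' - q') = k * ((p - p') - (q - q'))" by (simp add: algebra_simps)
      then show ?thesis using assms(2) by (simp add: abs_mult)
    qed
    also have "\<dots> \<le> k * (\<bar>p - p'\<bar> + \<bar>q - q'\<bar>)" using assms(2) by (intro mult_left_mono) auto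
    finally show ?thesis .
  qed
  have "\<bar>p - p'\<bar> * \<bar>1 + tanh (k * (p - q))\<bar> \<le> \<bar>p - p'\<bar> * 2"
    using t1 by (rule mult_left_mono) simp
  then have "\<bar>(p - p') * (1 + tanh (k * (p - q)))\<bar> \<le> 2 * \<bar>p - p'\<bar>"
    by (simp add: abs_mult mult.commute)
  moreover have "\<bar>p' * (tanh (k * (p - q)) - tanh (k * (p' - q')))\<bar> \<le> R * (k * (\<bar>p - p'\<bar> + \<bar>q - q'\<bar>))"
    unfolding abs_mult using assms t2 by (intro mult_mono) auto
  ultimately show ?thesis unfolding eq by (simp add: algebra_simps)
qed

definition fgen :: "nat \<Rightarrow> real \<Rightarrow> real \<Rightarrow> (nat \<Rightarrow> real) \<Rightarrow> (nat \<Rightarrow> real) \<Rightarrow> (nat \<Rightarrow> nat \<Rightarrow> real)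
    \<Rightarrow> (nat \<Rightarrow> real) \<Rightarrow> nat \<Rightarrow> real" where
  "fgen N c k g a w u i = g i * (a i * (1 - c * (\<Sum>j\<in>{..<N} - {i}. w i j * (u j * (1 + tanh (k * (u j - u i)))))) - u i)"

lemma fgen_cong: "i < N \<Longrightarrow> (\<And>j. j < N \<Longrightarrow> u j = v j) \<Longrightarrow> fgen N c k g a w u i = fgen N c k g a w v i"
  unfolding fgen_def by (intro arg_cong2[where f = "(*)"] refl arg_cong2[where f = "(-)"]
      arg_cong2[where f = "(+)"] sum.cong) auto

lemma fgen_growth:
  assumes c: "c \<ge> 0" and w: "\<And>i j. 0 \<le> w i j \<and> w i j \<le> W"
  shows "(\<Sum>i<N. \<bar>fgen N c k g a w u i\<bar>) \<le> (\<Sum>i<N. \<bar>g i\<bar> * \<bar>a i\<bar>)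
     + (\<Sum>i<N. \<bar>g i\<bar> * (\<bar>a i\<bar> * c * 2 * W + 1)) * (\<Sum>j<N. \<bar>u j\<bar>)"
proof -
  let ?S = "\<Sum>j<N. \<bar>u j\<bar>"
  have W0: "W \<ge> 0" using w[of 0 0] by auto
  have per: "\<bar>fgen N c k g a w u i\<bar> \<le> \<bar>g i\<bar> * \<bar>a i\<bar> + \<bar>g i\<bar> * (\<bar>a i\<bar> * c * 2 * W + 1) * ?S"
    if i: "i < N" for i
  proof -
    have sb: "\<bar>\<Sum>j\<in>{..<N} - {i}. w i j * (u j * (1 + tanh (k * (u j - u i))))\<bar> \<le> 2 * W * ?S"
    proof -
      have "\<bar>\<Sum>j\<in>{..<N} - {i}. w i j * (u j * (1 + tanh (k * (u j - u i))))\<bar>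
          \<le> (\<Sum>j\<in>{..<N} - {i}. \<bar>w i j * (u j * (1 + tanh (k * (u j - u i))))\<bar>)" by (rule sum_abs)
      also have "\<dots> \<le> (\<Sum>j\<in>{..<N} - {i}. 2 * W * \<bar>u j\<bar>)"
      proof (rule sum_mono)
        fix j
        have "\<bar>1 + tanh (k * (u j - u i))\<bar> \<le> 2" using tanh_real_bounds[of "k * (u j - u i)"] by auto
        then have "\<bar>u j\<bar> * \<bar>1 + tanh (k * (u j - u i))\<bar> \<le> \<bar>u j\<bar> * 2"
          by (rule mult_left_mono) simp
        then have "\<bar>u j * (1 + tanh (k * (u j - u i)))\<bar> \<le> 2 * \<bar>u j\<bar>"
          by (simp add: abs_mult mult.commute)
        moreover have "\<bar>w i j\<bar> \<le> W" using w[of i j] by auto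
        ultimately have "\<bar>w i j\<bar> * \<bar>u j * (1 + tanh (k * (u j - u i)))\<bar> \<le> W * (2 * \<bar>u j\<bar>)"
          using W0 by (intro mult_mono) auto
        then show "\<bar>w i j * (u j * (1 + tanh (k * (u j - u i))))\<bar> \<le> 2 * W * \<bar>u j\<bar>"
          by (simp add: abs_mult)
      qed
      also have "\<dots> \<le> (\<Sum>j<N. 2 * W * \<bar>u j\<bar>)" using W0 by (intro sum_mono2) auto
      also have "\<dots> = 2 * W * ?S" by (simp add: sum_distrib_left)
      finally show ?thesis .
    qed
    have ui: "\<bar>u i\<bar> \<le> ?S" using i by (intro member_le_sum) auto
    have "\<bar>a i * (1 - c * (\<Sum>j\<in>{..<N} - {i}. w i j * (u j * (1 + tanh (k * (u j - u i)))))) - u i\<bar>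
        \<le> \<bar>a i\<bar> * (1 + c * (2 * W * ?S)) + ?S"
    proof -
      have "\<bar>1 - c * (\<Sum>j\<in>{..<N} - {i}. w i j * (u j * (1 + tanh (k * (u j - u i)))))\<bar> \<le> 1 + c * (2 * W * ?S)"
      proof -
        let ?Z = "\<Sum>j\<in>{..<N} - {i}. w i j * (u j * (1 + tanh (k * (u j - u i))))"
        have "\<bar>c * ?Z\<bar> \<le> c * (2 * W * ?S)" using sb c by (simp add: abs_mult mult_left_mono)
        then show ?thesis by linarith
      qed
      then have "\<bar>a i * (1 - c * (\<Sum>j\<in>{..<N} - {i}. w i j * (u j * (1 + tanh (k * (u j - u i))))))\<bar>
          \<le> \<bar>a i\<bar> * (1 + c * (2 * W * ?S))" by (simp add: abs_mult mult_left_mono)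
      then show ?thesis using ui by linarith
    qed
    then have "\<bar>fgen N c k g a w u i\<bar> \<le> \<bar>g i\<bar> * (\<bar>a i\<bar> * (1 + c * (2 * W * ?S)) + ?S)"
      unfolding fgen_def abs_mult by (intro mult_left_mono) auto
    then show ?thesis by (simp add: algebra_simps)
  qed
  have "(\<Sum>i<N. \<bar>fgen N c k g a w u i\<bar>) \<le> (\<Sum>i<N. \<bar>g i\<bar> * \<bar>a i\<bar> + \<bar>g i\<bar> * (\<bar>a i\<bar> * c * 2 * W + 1) * ?S)"
    using per by (intro sum_mono) auto
  also have "\<dots> = (\<Sum>i<N. \<bar>g i\<bar> * \<bar>a i\<bar>) + (\<Sum>i<N. \<bar>g i\<bar> * (\<bar>a i\<bar> * c * 2 * W + 1)) * ?S"
    by (simp add: sum.distrib sum_distrib_right)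
  finally show ?thesis .
qed

lemma fgen_lip:
  assumes c: "c \<ge> 0" and k: "k \<ge> 0" and w: "\<And>i j. 0 \<le> w i j \<and> w i j \<le> W"
    and R: "R \<ge> 0" and bu: "\<And>j. j < N \<Longrightarrow> \<bar>u j\<bar> \<le> R" and bv: "\<And>j. j < N \<Longrightarrow> \<bar>v j\<bar> \<le> R"
  shows "(\<Sum>i<N. \<bar>fgen N c k g a w u i - fgen N c k g a w v i\<bar>)
     \<le> (\<Sum>i<N. \<bar>g i\<bar> * (\<bar>a i\<bar> * c * W * (2 + R * k + real N * R * k) + 1)) * (\<Sum>j<N. \<bar>u j - v j\<bar>)"
proof -
  let ?S = "\<Sum>j<N. \<bar>u j - v j\<bar>"
  have W0: "W \<ge> 0" using w[of 0 0] by auto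
  let ?h = "\<lambda>u i j. u j * (1 + tanh (k * (u j - u i)))"
  have per: "\<bar>fgen N c k g a w u i - fgen N c k g a w v i\<bar> \<le> \<bar>g i\<bar> * (\<bar>a i\<bar> * c * W * (2 + R * k + real N * R * k) + 1) * ?S"
    if i: "i < N" for i
  proof -
    have ui: "\<bar>u i - v i\<bar> \<le> ?S" using i by (intro member_le_sum) auto
    have sb: "\<bar>(\<Sum>j\<in>{..<N} - {i}. w i j * ?h u i j) - (\<Sum>j\<in>{..<N} - {i}. w i j * ?h v i j)\<bar>
        \<le> W * (2 + R * k + real N * R * k) * ?S"
    proof -
      have "\<bar>(\<Sum>j\<in>{..<N} - {i}. w i j * ?h u i j) - (\<Sum>j\<in>{..<N} - {i}. w i j * ?h v i j)\<bar>
          = \<bar>\<Sum>j\<in>{..<N} - {i}. w i j * (?h u i j - ?h v i j)\<bar>"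
        by (simp add: sum_subtractf algebra_simps)
      also have "\<dots> \<le> (\<Sum>j\<in>{..<N} - {i}. \<bar>w i j * (?h u i j - ?h v i j)\<bar>)" by (rule sum_abs)
      also have "\<dots> \<le> (\<Sum>j\<in>{..<N} - {i}. W * ((2 + R * k) * \<bar>u j - v j\<bar> + R * k * \<bar>u i - v i\<bar>))"
      proof (rule sum_mono)
        fix j assume j: "j \<in> {..<N} - {i}"
        have "\<bar>?h u i j - ?h v i j\<bar> \<le> (2 + R * k) * \<bar>u j - v j\<bar> + R * k * \<bar>u i - v i\<bar>"
          by (rule h_lip) (use bv j k in auto)
        moreover have "\<bar>w i j\<bar> \<le> W" using w[of i j] by auto
        ultimately show "\<bar>w i j * (?h u i j - ?h v i j)\<bar> \<le> W * ((2 + R * k) * \<bar>u j - v j\<bar> + R * k * \<bar>u i - v i\<bar>)"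
          unfolding abs_mult using W0 by (intro mult_mono) auto
      qed
      also have "\<dots> \<le> (\<Sum>j<N. W * ((2 + R * k) * \<bar>u j - v j\<bar> + R * k * \<bar>u i - v i\<bar>))"
        using W0 R k by (intro sum_mono2) auto
      also have "\<dots> = W * (2 + R * k) * ?S + real N * (W * R * k * \<bar>u i - v i\<bar>)"
        by (simp add: sum.distrib sum_distrib_left algebra_simps)
      also have "\<dots> \<le> W * (2 + R * k) * ?S + real N * (W * R * k * ?S)"
        using W0 R k ui by (intro add_left_mono mult_left_mono) auto
      also have "\<dots> = W * (2 + R * k + real N * R * k) * ?S" by (simp add: algebra_simps)
      finally show ?thesis .
    qed
    have eqf: "fgen N c k g a w u i - fgen N c k g a w v i
       = g i * (- (a i * c) * ((\<Sum>j\<in>{..<N} - {i}. w i j * ?h u i j) - (\<Sum>j\<in>{..<N} - {i}. w i j * ?h v i j)) - (u i - v i))"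
      unfolding fgen_def by (simp add: algebra_simps)
    have "\<bar>fgen N c k g a w u i - fgen N c k g a w v i\<bar>
       \<le> \<bar>g i\<bar> * (\<bar>a i\<bar> * c * \<bar>(\<Sum>j\<in>{..<N} - {i}. w i j * ?h u i j) - (\<Sum>j\<in>{..<N} - {i}. w i j * ?h v i j)\<bar> + \<bar>u i - v i\<bar>)"
    proof -
      let ?X = "(\<Sum>j\<in>{..<N} - {i}. w i j * ?h u i j) - (\<Sum>j\<in>{..<N} - {i}. w i j * ?h v i j)"
      have "\<bar>- (a i * c) * ?X - (u i - v i)\<bar> \<le> \<bar>a i\<bar> * c * \<bar>?X\<bar> + \<bar>u i - v i\<bar>"
        using c abs_triangle_ineq4[of "- (a i * c) * ?X" "u i - v i"] by (simp add: abs_mult)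
      then have "\<bar>g i\<bar> * \<bar>- (a i * c) * ?X - (u i - v i)\<bar> \<le> \<bar>g i\<bar> * (\<bar>a i\<bar> * c * \<bar>?X\<bar> + \<bar>u i - v i\<bar>)"
        by (rule mult_left_mono) simp
      then show ?thesis unfolding eqf by (simp only: abs_mult)
    qed
    also have "\<dots> \<le> \<bar>g i\<bar> * (\<bar>a i\<bar> * c * (W * (2 + R * k + real N * R * k) * ?S) + ?S)"
      using sb ui c by (intro mult_left_mono add_mono) (auto intro!: mult_left_mono)
    also have "\<dots> = \<bar>g i\<bar> * (\<bar>a i\<bar> * c * W * (2 + R * k + real N * R * k) + 1) * ?S"
      by (simp add: algebra_simps)
    finally show ?thesis .
  qed
  have "(\<Sum>i<N. \<bar>fgen N c k g a w u i - fgen N c k g a w v i\<bar>)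
      \<le> (\<Sum>i<N. \<bar>g i\<bar> * (\<bar>a i\<bar> * c * W * (2 + R * k + real N * R * k) + 1) * ?S)"
    using per by (intro sum_mono) auto
  also have "\<dots> = (\<Sum>i<N. \<bar>g i\<bar> * (\<bar>a i\<bar> * c * W * (2 + R * k + real N * R * k) + 1)) * ?S"
    by (simp add: sum_distrib_right)
  finally show ?thesis .
qed



definition clip :: "real \<Rightarrow> real \<Rightarrow> real" where "clip r z = max (- r) (min r z)"

lemma clip_abs: "r \<ge> 0 \<Longrightarrow> \<bar>clip r z\<bar> \<le> r" unfolding clip_def by auto
lemma clip_abs2: "r \<ge> 0 \<Longrightarrow> \<bar>clip r z\<bar> \<le> \<bar>z\<bar>" unfolding clip_def by auto
lemma clip_lip: "r \<ge> 0 \<Longrightarrow> \<bar>clip r z - clip r z'\<bar> \<le> \<bar>z - z'\<bar>" unfolding clip_def by auto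
lemma clip_id: "\<bar>z\<bar> \<le> r \<Longrightarrow> clip r z = z" unfolding clip_def by auto

lemma fgen_exists:
  assumes N: "N \<ge> 1" and c: "c \<ge> 0" and k: "k \<ge> 0" and w: "\<And>i j. 0 \<le> w i j \<and> w i j \<le> W"
  shows "\<exists>U. \<forall>i<N. U i 0 = u0 i \<and>
     (\<forall>t\<ge>0. (U i has_real_derivative fgen N c k g a w (\<lambda>j. U j t) i) (at t within {0..}))"
proof -
  define f where "f = fgen N c k g a w"
  define A where "A = (\<Sum>i<N. \<bar>g i\<bar> * \<bar>a i\<bar>)"
  define B where "B = (\<Sum>i<N. \<bar>g i\<bar> * (\<bar>a i\<bar> * c * 2 * W + 1))"
  have W0: "W \<ge> 0" using w[of 0 0] by auto
  have A0: "A \<ge> 0" unfolding A_def by (intro sum_nonneg) auto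
  have B0: "B \<ge> 0" unfolding B_def using c W0 by (intro sum_nonneg) auto
  have growth: "(\<Sum>i<N. \<bar>f u i\<bar>) \<le> A + B * (\<Sum>j<N. \<bar>u j\<bar>)" for u
    unfolding f_def A_def B_def by (rule fgen_growth[OF c w])
  define K where "K = A + B"
  define V0 where "V0 = (\<Sum>j<N. sqrt (1 + (u0 j)\<^sup>2))"
  define Rt where "Rt = (\<lambda>t. V0 * exp (K * t) + 1)"
  have V00: "V0 \<ge> 0" unfolding V0_def by (intro sum_nonneg) auto
  have Rt0: "Rt t \<ge> 0" for t unfolding Rt_def using V00 by simp
  have Rtmono: "Rt t \<le> Rt T" if "t \<le> T" for t T
    unfolding Rt_def using that V00 A0 B0 K_def by (simp add: mult_left_mono)
  define F where "F = (\<lambda>t u i. f (\<lambda>j. clip (Rt t) (u j)) i)"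
  have "\<exists>U. \<forall>i<N. U i 0 = u0 i \<and>
           (\<forall>t\<ge>0. (U i has_real_derivative F t (\<lambda>j. U j t) i) (at t within {0..}))"
  proof (rule picard)
    fix P :: "nat \<Rightarrow> real \<Rightarrow> real" and T i assume i: "i < N"
      and Pc: "\<And>j. j < N \<Longrightarrow> continuous_on {0..T} (P j)"
    have cc: "continuous_on {0..T} (\<lambda>t. clip (Rt t) (P j t))" if "j < N" for j
      unfolding clip_def Rt_def using Pc[OF that] by (intro continuous_intros)
    have ct: "continuous_on {0..T} (\<lambda>t. tanh (k * (clip (Rt t) (P j t) - clip (Rt t) (P i t))))" if "j < N" for j
      by (rule continuous_on_tanh) (intro continuous_intros cc that i, simp add: less_imp_neq[OF cosh_real_pos, symmetric])
    have cs: "continuous_on {0..T} (\<lambda>t. \<Sum>j\<in>{..<N} - {i}. w i j * (clip (Rt t) (P j t) *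
                 (1 + tanh (k * (clip (Rt t) (P j t) - clip (Rt t) (P i t))))))"
      by (rule continuous_on_sum) (intro continuous_intros cc ct; simp)
    show "continuous_on {0..T} (\<lambda>t. F t (\<lambda>j. P j t) i)"
      unfolding F_def f_def fgen_def
      by (intro continuous_intros cs cc i)
  next
    fix T
    let ?L = "(\<Sum>i<N. \<bar>g i\<bar> * (\<bar>a i\<bar> * c * W * (2 + Rt T * k + real N * Rt T * k) + 1))"
    show "\<exists>L\<ge>0. \<forall>t\<in>{0..T}. \<forall>u v. (\<Sum>i<N. \<bar>F t u i - F t v i\<bar>) \<le> L * (\<Sum>j<N. \<bar>u j - v j\<bar>)"
    proof (intro exI conjI ballI allI)
      show "?L \<ge> 0" using c W0 k Rt0[of T] by (intro sum_nonneg) auto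
      fix t u v assume t: "t \<in> {0..T}"
      have cb: "\<bar>clip (Rt t) z\<bar> \<le> Rt T" for z
        by (rule order.trans[OF clip_abs[OF Rt0] Rtmono]) (use t in auto)
      have "(\<Sum>i<N. \<bar>F t u i - F t v i\<bar>) \<le> ?L * (\<Sum>j<N. \<bar>clip (Rt t) (u j) - clip (Rt t) (v j)\<bar>)"
        unfolding F_def f_def
        by (rule fgen_lip[OF c k w Rt0]) (use cb in auto)
      also have "\<dots> \<le> ?L * (\<Sum>j<N. \<bar>u j - v j\<bar>)"
        using \<open>?L \<ge> 0\<close> clip_lip[OF Rt0] by (intro mult_left_mono sum_mono) auto
      finally show "(\<Sum>i<N. \<bar>F t u i - F t v i\<bar>) \<le> ?L * (\<Sum>j<N. \<bar>u j - v j\<bar>)" .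
    qed
  next
    fix T
    show "\<exists>M. \<forall>t\<in>{0..T}. \<forall>u. (\<Sum>i<N. \<bar>F t u i\<bar>) \<le> M"
    proof (intro exI ballI allI)
      fix t u assume t: "t \<in> {0..T}"
      have "(\<Sum>i<N. \<bar>F t u i\<bar>) \<le> A + B * (\<Sum>j<N. \<bar>clip (Rt t) (u j)\<bar>)"
        unfolding F_def by (rule growth)
      also have "\<dots> \<le> A + B * (\<Sum>j<N. Rt T)"
      proof -
        have cb: "\<bar>clip (Rt t) z\<bar> \<le> Rt T" for z
          by (rule order.trans[OF clip_abs[OF Rt0] Rtmono]) (use t in auto)
        show ?thesis using B0 cb by (intro add_left_mono mult_left_mono sum_mono) auto
      qed
      finally show "(\<Sum>i<N. \<bar>F t u i\<bar>) \<le> A + B * (\<Sum>j<N. Rt T)" .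
    qed
  qed
  then obtain U where U0: "\<And>i. i < N \<Longrightarrow> U i 0 = u0 i"
    and Ud: "\<And>i t. i < N \<Longrightarrow> t \<ge> 0 \<Longrightarrow> (U i has_real_derivative F t (\<lambda>j. U j t) i) (at t within {0..})"
    by blast
  have inbox: "\<bar>U j t\<bar> \<le> Rt t" if j: "j < N" and t: "t \<ge> 0" for j t
  proof -
    have "(\<Sum>j<N. sqrt (1 + (U j t)\<^sup>2)) \<le> (\<Sum>j<N. sqrt (1 + (U j 0)\<^sup>2)) * exp (K * t)"
    proof (rule lyap[where d = "\<lambda>j \<tau>. F \<tau> (\<lambda>j. U j \<tau>) j" and T = t])
      show "(0::real) < 1" by simp
      show "0 \<le> t" by fact
      show "\<forall>j<N. \<forall>\<tau>\<in>{0..t}. (U j has_real_derivative F \<tau> (\<lambda>j. U j \<tau>) j) (at \<tau> within {0..t})"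
      proof (intro allI impI ballI)
        fix j \<tau> assume j: "j < N" and tau: "\<tau> \<in> {0..t}"
        show "(U j has_real_derivative F \<tau> (\<lambda>j. U j \<tau>) j) (at \<tau> within {0..t})"
          by (rule has_field_derivative_subset[OF Ud[OF j]]) (use tau in auto)
      qed
      show "\<forall>\<tau>\<in>{0..t}. (\<Sum>j<N. \<bar>F \<tau> (\<lambda>j. U j \<tau>) j\<bar>) \<le> K * (\<Sum>j<N. sqrt (1 + (U j \<tau>)\<^sup>2))"
      proof
        fix \<tau> assume tau: "\<tau> \<in> {0..t}"
        let ?Q = "\<Sum>j<N. sqrt (1 + (U j \<tau>)\<^sup>2)"
        have Q1: "1 \<le> ?Q"
        proof -
          have "(\<Sum>j<N. (1::real)) \<le> ?Q" by (intro sum_mono) auto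
          then show ?thesis using N by simp
        qed
        have sq: "\<bar>z\<bar> \<le> sqrt (1 + z\<^sup>2)" for z :: real
          by (metis real_sqrt_abs real_sqrt_le_mono le_add_same_cancel2 zero_le_one)
        have "(\<Sum>j<N. \<bar>F \<tau> (\<lambda>j. U j \<tau>) j\<bar>) \<le> A + B * (\<Sum>j<N. \<bar>clip (Rt \<tau>) (U j \<tau>)\<bar>)"
          unfolding F_def by (rule growth)
        also have "\<dots> \<le> A + B * (\<Sum>j<N. \<bar>U j \<tau>\<bar>)"
          using B0 clip_abs2[OF Rt0] by (intro add_left_mono mult_left_mono sum_mono) auto
        also have "\<dots> \<le> A * ?Q + B * ?Q"
        proof (rule add_mono)
          show "A \<le> A * ?Q" using A0 Q1 mult_left_mono[OF Q1 A0] by simp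
          show "B * (\<Sum>j<N. \<bar>U j \<tau>\<bar>) \<le> B * ?Q"
            using B0 sq by (intro mult_left_mono sum_mono) auto
        qed
        finally show "(\<Sum>j<N. \<bar>F \<tau> (\<lambda>j. U j \<tau>) j\<bar>) \<le> K * ?Q" unfolding K_def by (simp add: algebra_simps)
      qed
      show "t \<in> {0..t}" using t by simp
    qed
    also have "\<dots> = V0 * exp (K * t)" unfolding V0_def using U0 by simp
    finally have Ssum: "(\<Sum>j<N. sqrt (1 + (U j t)\<^sup>2)) \<le> V0 * exp (K * t)" .
    have "\<bar>U j t\<bar> \<le> sqrt (1 + (U j t)\<^sup>2)"
      by (metis real_sqrt_abs real_sqrt_le_mono le_add_same_cancel2 zero_le_one)
    also have "\<dots> \<le> (\<Sum>j<N. sqrt (1 + (U j t)\<^sup>2))" using j by (intro member_le_sum) auto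
    finally show ?thesis using Ssum unfolding Rt_def by simp
  qed
  show ?thesis
  proof (intro exI allI impI conjI)
    fix i assume i: "i < N"
    show "U i 0 = u0 i" using U0 i .
    fix t :: real assume t: "t \<ge> 0"
    have "F t (\<lambda>j. U j t) i = fgen N c k g a w (\<lambda>j. U j t) i"
      unfolding F_def f_def using i inbox t by (intro fgen_cong) (auto intro: clip_id)
    then show "(U i has_real_derivative fgen N c k g a w (\<lambda>j. U j t) i) (at t within {0..})"
      using Ud[OF i t] by simp
  qed
qed



lemma abs_le_sqrt_eps: "\<epsilon> \<ge> 0 \<Longrightarrow> \<bar>z\<bar> \<le> sqrt (\<epsilon> + z\<^sup>2)" for z :: real
  by (metis real_sqrt_abs real_sqrt_le_mono le_add_same_cancel2)

lemma deriv_cont_on: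
  assumes "\<forall>t\<in>{0..T}. (u has_real_derivative d t) (at t within {0..T})"
  shows "continuous_on {0..T} u"
  unfolding continuous_on_eq_continuous_within using assms DERIV_continuous by blast

lemma fgen_unique_local:
  assumes c: "c \<ge> 0" and k: "k \<ge> 0" and w: "\<And>i j. 0 \<le> w i j \<and> w i j \<le> W" and T: "0 \<le> T"
    and dU: "\<forall>j<N. \<forall>t\<in>{0..T}. (U j has_real_derivative fgen N c k g a w (\<lambda>i. U i t) j) (at t within {0..T})"
    and dV: "\<forall>j<N. \<forall>t\<in>{0..T}. (V j has_real_derivative fgen N c k g a w (\<lambda>i. V i t) j) (at t within {0..T})"
    and init: "\<forall>j<N. U j 0 = V j 0"
  shows "\<forall>j<N. \<forall>t\<in>{0..T}. U j t = V j t"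
proof -
  define f where "f = fgen N c k g a w"
  have W0: "W \<ge> 0" using w[of 0 0] by auto
  have cU: "continuous_on {0..T} (U j)" if "j < N" for j
    using dU that by (intro deriv_cont_on[where d = "\<lambda>t. fgen N c k g a w (\<lambda>i. U i t) j"]) auto
  have cV: "continuous_on {0..T} (V j)" if "j < N" for j
    using dV that by (intro deriv_cont_on[where d = "\<lambda>t. fgen N c k g a w (\<lambda>i. V i t) j"]) auto
  define h where "h = (\<lambda>t. \<Sum>j<N. \<bar>U j t\<bar> + \<bar>V j t\<bar>)"
  have ch: "continuous_on {0..T} h" unfolding h_def
    by (intro continuous_on_sum continuous_intros cU cV) auto
  obtain x where x: "x \<in> {0..T}" "\<forall>y\<in>{0..T}. h y \<le> h x"
    using continuous_attains_sup[OF compact_Icc _ ch] T by auto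
  define R where "R = h x"
  have R0: "R \<ge> 0" unfolding R_def h_def by (intro sum_nonneg) auto
  have bU: "\<bar>U j t\<bar> \<le> R" if "j < N" "t \<in> {0..T}" for j t
  proof -
    have "\<bar>U j t\<bar> \<le> \<bar>U j t\<bar> + \<bar>V j t\<bar>" by simp
    also have "\<dots> \<le> h t" unfolding h_def using that
      by (intro member_le_sum[where f = "\<lambda>j. \<bar>U j t\<bar> + \<bar>V j t\<bar>"]) auto
    finally show ?thesis using x that unfolding R_def by force
  qed
  have bV: "\<bar>V j t\<bar> \<le> R" if "j < N" "t \<in> {0..T}" for j t
  proof -
    have "\<bar>V j t\<bar> \<le> \<bar>U j t\<bar> + \<bar>V j t\<bar>" by simp
    also have "\<dots> \<le> h t" unfolding h_def using that
      by (intro member_le_sum[where f = "\<lambda>j. \<bar>U j t\<bar> + \<bar>V j t\<bar>"]) auto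
    finally show ?thesis using x that unfolding R_def by force
  qed
  define Lc where "Lc = (\<Sum>i<N. \<bar>g i\<bar> * (\<bar>a i\<bar> * c * W * (2 + R * k + real N * R * k) + 1))"
  have Lc0: "Lc \<ge> 0" unfolding Lc_def using c W0 R0 k by (intro sum_nonneg) auto
  have est: "(\<Sum>j<N. sqrt (\<epsilon> + (U j t - V j t)\<^sup>2)) \<le> real N * sqrt \<epsilon> * exp (Lc * t)"
    if eps: "\<epsilon> > 0" and t: "t \<in> {0..T}" for \<epsilon> t
  proof -
    have "(\<Sum>j<N. sqrt (\<epsilon> + ((\<lambda>j t. U j t - V j t) j t)\<^sup>2))
        \<le> (\<Sum>j<N. sqrt (\<epsilon> + ((\<lambda>j t. U j t - V j t) j 0)\<^sup>2)) * exp (Lc * t)"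
    proof (rule lyap[OF eps T, where d = "\<lambda>j t. f (\<lambda>i. U i t) j - f (\<lambda>i. V i t) j"])
      show "\<forall>j<N. \<forall>t\<in>{0..T}. ((\<lambda>t. U j t - V j t) has_real_derivative f (\<lambda>i. U i t) j - f (\<lambda>i. V i t) j) (at t within {0..T})"
        using dU dV unfolding f_def by (auto intro!: DERIV_diff)
      show "\<forall>t\<in>{0..T}. (\<Sum>j<N. \<bar>f (\<lambda>i. U i t) j - f (\<lambda>i. V i t) j\<bar>) \<le> Lc * (\<Sum>j<N. sqrt (\<epsilon> + (U j t - V j t)\<^sup>2))"
      proof
        fix t assume t: "t \<in> {0..T}"
        have "(\<Sum>j<N. \<bar>f (\<lambda>i. U i t) j - f (\<lambda>i. V i t) j\<bar>) \<le> Lc * (\<Sum>j<N. \<bar>U j t - V j t\<bar>)"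
          unfolding f_def Lc_def by (rule fgen_lip[OF c k w R0]) (use bU bV t in auto)
        also have "\<dots> \<le> Lc * (\<Sum>j<N. sqrt (\<epsilon> + (U j t - V j t)\<^sup>2))"
          using Lc0 abs_le_sqrt_eps eps by (intro mult_left_mono sum_mono) auto
        finally show "(\<Sum>j<N. \<bar>f (\<lambda>i. U i t) j - f (\<lambda>i. V i t) j\<bar>) \<le> Lc * (\<Sum>j<N. sqrt (\<epsilon> + (U j t - V j t)\<^sup>2))" .
      qed
      show "t \<in> {0..T}" by fact
    qed
    also have "\<dots> = real N * sqrt \<epsilon> * exp (Lc * t)" using init by simp
    finally show ?thesis by simp
  qed
  show ?thesis
  proof (intro allI impI ballI)
    fix j t assume j: "j < N" and t: "t \<in> {0..T}"
    show "U j t = V j t"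
    proof (rule ccontr)
      assume ne: "U j t \<noteq> V j t"
      define \<delta> where "\<delta> = \<bar>U j t - V j t\<bar>"
      have d0: "\<delta> > 0" unfolding \<delta>_def using ne by simp
      define E where "E = real N * exp (Lc * t)"
      have E0: "E > 0" unfolding E_def using j by simp
      define \<epsilon> where "\<epsilon> = (\<delta> / (2 * E))\<^sup>2"
      have eps: "\<epsilon> > 0" unfolding \<epsilon>_def using d0 E0 by simp
      have se: "sqrt \<epsilon> = \<delta> / (2 * E)" unfolding \<epsilon>_def using d0 E0 by simp
      have "\<delta> \<le> sqrt (\<epsilon> + (U j t - V j t)\<^sup>2)" unfolding \<delta>_def using eps abs_le_sqrt_eps by simp
      also have "\<dots> \<le> (\<Sum>j<N. sqrt (\<epsilon> + (U j t - V j t)\<^sup>2))"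
        using j eps by (intro member_le_sum[where f = "\<lambda>j. sqrt (\<epsilon> + (U j t - V j t)\<^sup>2)"]) auto
      also have "\<dots> \<le> real N * sqrt \<epsilon> * exp (Lc * t)" by (rule est[OF eps t])
      also have "\<dots> = \<delta> / 2" unfolding se using E0 j unfolding E_def by (simp add: field_simps)
      finally show False using d0 by simp
    qed
  qed
qed



lemma rhs_eq:
  assumes sm: "s_m > 0" and i: "i < N" and pos: "\<forall>j<N. s j > 0"
  shows "rhs N s_m \<sigma>_x \<sigma>_r R_M x y S \<gamma> s i = s i * fgen N (1 / real (N - 1)) (1 / \<sigma>_r) \<gamma> (\<lambda>i. ln (S i / s_m))
     (\<lambda>i j. 1 / (2 * R_M * (1 + (dist (x i, y i) (x j, y j))\<^sup>2 / \<sigma>_x\<^sup>2))) (\<lambda>j. ln (s j / s_m)) i"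
proof -
  have sum: "(\<Sum>j\<in>{..<N} - {i}. interC s_m \<sigma>_x \<sigma>_r R_M (s i) (s j) (dist (x i, y i) (x j, y j)))
     = (\<Sum>j\<in>{..<N} - {i}. 1 / (2 * R_M * (1 + (dist (x i, y i) (x j, y j))\<^sup>2 / \<sigma>_x\<^sup>2)) *
          (ln (s j / s_m) * (1 + tanh (1 / \<sigma>_r * (ln (s j / s_m) - ln (s i / s_m))))))"
  proof (rule sum.cong[OF refl])
    fix j assume j: "j \<in> {..<N} - {i}"
    have pj: "s j > 0" and pi: "s i > 0" using pos j i by auto
    have "ln (s j / s i) = ln (s j) - ln (s i)" by (rule ln_divide_pos[OF pj pi])
    moreover have "ln (s j / s_m) = ln (s j) - ln s_m" by (rule ln_divide_pos[OF pj sm])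
    moreover have "ln (s i / s_m) = ln (s i) - ln s_m" by (rule ln_divide_pos[OF pi sm])
    ultimately have "ln (s j / s i) = ln (s j / s_m) - ln (s i / s_m)" by simp
    then show "interC s_m \<sigma>_x \<sigma>_r R_M (s i) (s j) (dist (x i, y i) (x j, y j)) =
      1 / (2 * R_M * (1 + (dist (x i, y i) (x j, y j))\<^sup>2 / \<sigma>_x\<^sup>2)) *
          (ln (s j / s_m) * (1 + tanh (1 / \<sigma>_r * (ln (s j / s_m) - ln (s i / s_m)))))"
      unfolding interC_def by simp
  qed
  show ?thesis unfolding rhs_def fgen_def sum by (simp add: algebra_simps)
qed

theorem proposition1:
  fixes N :: nat and s_m \<sigma>_x \<sigma>_r R_M :: real
    and s0 x y S \<gamma> :: "nat \<Rightarrow> real"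
  assumes "N \<ge> 2"
    and "s_m > 0" and "\<sigma>_x > 0" and "\<sigma>_r > 0" and "R_M > 0"
    and "\<forall>i<N. s0 i > 0"
    and "\<forall>i<N. S i > 0" and "\<forall>i<N. \<gamma> i > 0"
    and "\<forall>i<N. ln (S i / s_m) \<le> R_M"
  shows "\<exists>s. is_solution N s_m \<sigma>_x \<sigma>_r R_M x y S \<gamma> s0 s
            \<and> (\<forall>s'. is_solution N s_m \<sigma>_x \<sigma>_r R_M x y S \<gamma> s0 s' \<longrightarrow>
                   (\<forall>i<N. \<forall>t\<ge>0. s' i t = s i t))
            \<and> (\<forall>i<N. \<forall>t\<ge>0. s i t > 0)"
proof -
  note N2 = assms(1) and sm = assms(2) and sx = assms(3) and sr = assms(4) and RM = assms(5)
    and s0p = assms(6)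
  define c where "c = 1 / real (N - 1)"
  define k where "k = 1 / \<sigma>_r"
  define a where "a = (\<lambda>i. ln (S i / s_m))"
  define w where "w = (\<lambda>i j. 1 / (2 * R_M * (1 + (dist (x i, y i) (x j, y j))\<^sup>2 / \<sigma>_x\<^sup>2)))"
  define W where "W = 1 / (2 * R_M)"
  define f where "f = fgen N c k \<gamma> a w"
  have c0: "c \<ge> 0" unfolding c_def by simp
  have k0: "k \<ge> 0" unfolding k_def using sr by simp
  have wb: "0 \<le> w i j \<and> w i j \<le> W" for i j
  proof -
    let ?q = "(dist (x i, y i) (x j, y j))\<^sup>2 / \<sigma>_x\<^sup>2"
    have q: "?q \<ge> 0" by simp
    have le: "2 * R_M \<le> 2 * R_M * (1 + ?q)" using RM q by simp
    have den: "0 < 2 * R_M * (1 + ?q)" using RM q by (intro mult_pos_pos) (auto simp: add_pos_nonneg)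
    have "1 / (2 * R_M * (1 + ?q)) \<le> 1 / (2 * R_M)"
      by (rule divide_left_mono[OF le]) (use den RM in auto)
    then show ?thesis unfolding w_def W_def using den by simp
  qed
  have rhsf: "rhs N s_m \<sigma>_x \<sigma>_r R_M x y S \<gamma> s i = s i * f (\<lambda>j. ln (s j / s_m)) i"
    if "i < N" "\<forall>j<N. s j > 0" for s i
    unfolding f_def c_def k_def a_def w_def using rhs_eq[OF sm that] .
  define u0 where "u0 = (\<lambda>j. ln (s0 j / s_m))"
  obtain U where U0: "\<And>i. i < N \<Longrightarrow> U i 0 = u0 i"
    and Ud: "\<And>i t. i < N \<Longrightarrow> t \<ge> 0 \<Longrightarrow> (U i has_real_derivative f (\<lambda>j. U j t) i) (at t within {0..})"
  proof -
    have "\<exists>U. \<forall>i<N. U i 0 = u0 i \<and>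
     (\<forall>t\<ge>0. (U i has_real_derivative fgen N c k \<gamma> a w (\<lambda>j. U j t) i) (at t within {0..}))"
      by (rule fgen_exists[OF _ c0 k0 wb]) (use N2 in simp)
    then show ?thesis using that unfolding f_def by blast
  qed
  define s where "s = (\<lambda>i t. s_m * exp (U i t))"
  have spos: "s i t > 0" for i t unfolding s_def using sm by simp
  have lns: "ln (s j t / s_m) = U j t" for j t unfolding s_def using sm by simp
  have sol: "is_solution N s_m \<sigma>_x \<sigma>_r R_M x y S \<gamma> s0 s"
    unfolding is_solution_def
  proof (intro conjI allI impI)
    fix i assume i: "i < N"
    show "s i 0 = s0 i" unfolding s_def using U0[OF i] s0p i sm unfolding u0_def by simp
    fix t :: real assume t: "t \<ge> 0"
    have "rhs N s_m \<sigma>_x \<sigma>_r R_M x y S \<gamma> (\<lambda>j. s j t) i = s i t * f (\<lambda>j. U j t) i"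
      using rhsf[of i "\<lambda>j. s j t"] i spos lns by simp
    moreover have "(s i has_real_derivative s i t * f (\<lambda>j. U j t) i) (at t within {0..})"
      unfolding s_def by (auto intro!: derivative_eq_intros Ud[OF i t])
    ultimately show "(s i has_real_derivative rhs N s_m \<sigma>_x \<sigma>_r R_M x y S \<gamma> (\<lambda>j. s j t) i) (at t within {0..})"
      by simp
  qed
  have uniq: "\<forall>i<N. \<forall>t\<ge>0. s' i t = s i t" if sol': "is_solution N s_m \<sigma>_x \<sigma>_r R_M x y S \<gamma> s0 s'" for s'
  proof -
    have s'0: "\<And>i. i < N \<Longrightarrow> s' i 0 = s0 i" using sol' unfolding is_solution_def by auto
    have s'd: "\<And>i t. i < N \<Longrightarrow> t \<ge> 0 \<Longrightarrow> (s' i has_real_derivative rhs N s_m \<sigma>_x \<sigma>_r R_M x y S \<gamma> (\<lambda>j. s' j t) i) (at t within {0..})"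
      using sol' unfolding is_solution_def by auto
    have s'c: "continuous_on {0..} (s' i)" if "i < N" for i
      unfolding continuous_on_eq_continuous_within using s'd[OF that] DERIV_continuous by fastforce
    have sc: "continuous_on {0..} (s i)" if "i < N" for i
      unfolding continuous_on_eq_continuous_within using Ud[OF that] unfolding s_def
      by (auto intro!: DERIV_continuous derivative_eq_intros)
    have local: "\<forall>j<N. \<forall>\<tau>\<in>{0..T}. s' j \<tau> = s j \<tau>"
      if T: "T \<ge> 0" and posT: "\<forall>\<tau>\<in>{0..T}. \<forall>j<N. s' j \<tau> > 0" for T
    proof -
      define V where "V = (\<lambda>j \<tau>. ln (s' j \<tau> / s_m))"
      have "\<forall>j<N. \<forall>\<tau>\<in>{0..T}. V j \<tau> = U j \<tau>"
      proof (rule fgen_unique_local[OF c0 k0 wb T])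
        show "\<forall>j<N. \<forall>t\<in>{0..T}. (V j has_real_derivative fgen N c k \<gamma> a w (\<lambda>i. V i t) j) (at t within {0..T})"
        proof (intro allI impI ballI)
          fix j t assume j: "j < N" and t: "t \<in> {0..T}"
          have p: "\<forall>i<N. s' i t > 0" using posT t by auto
          have d: "(s' j has_real_derivative rhs N s_m \<sigma>_x \<sigma>_r R_M x y S \<gamma> (\<lambda>i. s' i t) j) (at t within {0..T})"
            by (rule has_field_derivative_subset[OF s'd[OF j]]) (use t in auto)
          have "(V j has_real_derivative (rhs N s_m \<sigma>_x \<sigma>_r R_M x y S \<gamma> (\<lambda>i. s' i t) j / s_m) / (s' j t / s_m)) (at t within {0..T})"
            unfolding V_def using p j sm by (auto intro!: derivative_eq_intros d)
          moreover have "(rhs N s_m \<sigma>_x \<sigma>_r R_M x y S \<gamma> (\<lambda>i. s' i t) j / s_m) / (s' j t / s_m) = f (\<lambda>i. V i t) j"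
            using rhsf[of j "\<lambda>i. s' i t"] j p sm unfolding V_def
            by (simp add: less_imp_neq[OF p[rule_format, OF j], symmetric])
          ultimately show "(V j has_real_derivative fgen N c k \<gamma> a w (\<lambda>i. V i t) j) (at t within {0..T})"
            unfolding f_def by simp
        qed
        show "\<forall>j<N. \<forall>t\<in>{0..T}. (U j has_real_derivative fgen N c k \<gamma> a w (\<lambda>i. U i t) j) (at t within {0..T})"
        proof (intro allI impI ballI)
          fix j t assume j: "j < N" and t: "t \<in> {0..T}"
          show "(U j has_real_derivative fgen N c k \<gamma> a w (\<lambda>i. U i t) j) (at t within {0..T})"
            using has_field_derivative_subset[OF Ud[OF j, of t], of "{0..T}"] t unfolding f_def by auto
        qed
        show "\<forall>j<N. V j 0 = U j 0" unfolding V_def using U0 s'0 unfolding u0_def by simp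
      qed
      then show ?thesis
      proof (intro allI impI ballI)
        fix j \<tau> assume "\<forall>j<N. \<forall>\<tau>\<in>{0..T}. V j \<tau> = U j \<tau>" and j: "j < N" and tau: "\<tau> \<in> {0..T}"
        then have "ln (s' j \<tau> / s_m) = U j \<tau>" unfolding V_def by auto
        then have e: "exp (ln (s' j \<tau> / s_m)) = exp (U j \<tau>)" by simp
        have "s' j \<tau> / s_m > 0" using posT tau j sm by auto
        then have "s' j \<tau> / s_m = exp (U j \<tau>)" using e by simp
        then show "s' j \<tau> = s j \<tau>" unfolding s_def using sm by (simp add: field_simps)
      qed
    qed
    have allpos: "\<forall>j<N. s' j t > 0" if t: "t \<ge> 0" for t
    proof (rule ccontr)
      assume "\<not> (\<forall>j<N. s' j t > 0)"
      define B where "B = {t. 0 \<le> t \<and> (\<exists>j<N. s' j t \<le> 0)}"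
      have tB: "t \<in> B" unfolding B_def using t \<open>\<not> (\<forall>j<N. s' j t > 0)\<close> by auto
      have bdd: "bdd_below B" unfolding B_def by (rule bdd_belowI[of _ 0]) auto
      define T0 where "T0 = Inf B"
      have T00: "T0 \<ge> 0" unfolding T0_def using tB by (intro cInf_greatest) (auto simp: B_def)
      have before: "\<forall>j<N. s' j \<tau> > 0" if "0 \<le> \<tau>" "\<tau> < T0" for \<tau>
      proof (rule ccontr)
        assume "\<not> (\<forall>j<N. s' j \<tau> > 0)"
        then have "\<tau> \<in> B" unfolding B_def using that by auto
        then have "T0 \<le> \<tau>" unfolding T0_def by (rule cInf_lower[OF _ bdd])
        then show False using that by simp
      qed
      have atT0: "s' j T0 = s j T0" if j: "j < N" for j
      proof (cases "T0 = 0")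
        case True
        then show ?thesis using s'0[OF j] sol j unfolding is_solution_def by auto
      next
        case False
        then have T0p: "T0 > 0" using T00 by simp
        have eqb: "s' j \<tau> = s j \<tau>" if "\<tau> \<in> {0..<T0}" for \<tau>
        proof -
          have "\<forall>\<sigma>\<in>{0..\<tau>}. \<forall>j<N. s' j \<sigma> > 0" using before that by auto
          then show ?thesis using local[of \<tau>] that j by auto
        qed
        have cd: "continuous_on {0..T0} (\<lambda>\<tau>. s' j \<tau> - s j \<tau>)"
          by (intro continuous_intros continuous_on_subset[OF s'c[OF j]] continuous_on_subset[OF sc[OF j]]) auto
        have cl: "closed {\<tau> \<in> {0..T0}. s' j \<tau> - s j \<tau> = 0}"
          by (rule continuous_closed_preimage_constant[OF cd]) simp
        have "closure {0..<T0} \<subseteq> {\<tau> \<in> {0..T0}. s' j \<tau> - s j \<tau> = 0}"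
          by (rule closure_minimal[OF _ cl]) (use eqb in auto)
        then have "T0 \<in> {\<tau> \<in> {0..T0}. s' j \<tau> - s j \<tau> = 0}" using T0p
          by (simp add: subset_iff)
        then show ?thesis by simp
      qed
      have posT0: "\<forall>j<N. s' j T0 > 0" using atT0 spos by simp
      have ev: "\<forall>\<^sub>F \<tau> in at T0 within {0..}. \<forall>j\<in>{..<N}. s' j \<tau> > 0"
      proof (rule eventually_ball_finite)
        show "\<forall>j\<in>{..<N}. \<forall>\<^sub>F \<tau> in at T0 within {0..}. s' j \<tau> > 0"
        proof
          fix j assume j: "j \<in> {..<N}"
          have "continuous (at T0 within {0..}) (s' j)"
            using s'c j T00 by (simp add: continuous_on_eq_continuous_within)
          then have "(s' j \<longlongrightarrow> s' j T0) (at T0 within {0..})" by (simp add: continuous_within)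
          then show "\<forall>\<^sub>F \<tau> in at T0 within {0..}. s' j \<tau> > 0"
            using posT0 j by (intro order_tendstoD(1)) auto
        qed
      qed simp
      then obtain d where d: "d > 0" "\<forall>\<tau>\<in>{0..}. \<tau> \<noteq> T0 \<and> dist \<tau> T0 < d \<longrightarrow> (\<forall>j\<in>{..<N}. s' j \<tau> > 0)"
        unfolding eventually_at by auto
      have "T0 + d \<le> Inf B"
      proof (rule cInf_greatest)
        show "B \<noteq> {}" using tB by auto
        fix b assume b: "b \<in> B"
        then obtain j where j: "j < N" "s' j b \<le> 0" and b0: "0 \<le> b" unfolding B_def by auto
        show "T0 + d \<le> b"
        proof (rule ccontr)
          assume "\<not> T0 + d \<le> b"
          then have bl: "b < T0 + d" by simp
          consider "b < T0" | "b = T0" | "b > T0" by linarith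
          then show False
          proof cases
            case 1 then show ?thesis using before[OF b0 1] j by auto
          next
            case 2 then show ?thesis using posT0 j by auto
          next
            case 3
            then have "dist b T0 < d" using bl by (simp add: dist_real_def)
            then have "\<forall>j\<in>{..<N}. 0 < s' j b" using d(2) b0 3 by simp
            then have "0 < s' j b" using j(1) by blast
            then show ?thesis using j(2) by linarith
          qed
        qed
      qed
      then show False using d(1) unfolding T0_def by simp
    qed
    show ?thesis
    proof (intro allI impI)
      fix i t assume i: "i < N" and t: "(t::real) \<ge> 0"
      have "\<forall>\<tau>\<in>{0..t}. \<forall>j<N. s' j \<tau> > 0" using allpos by auto
      then show "s' i t = s i t" using local[OF t] i t by auto
    qed
  qed
  show ?thesis using sol uniq spos by blast
qed


end
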